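(* The function $\mathrm{Eci}(x,\lambda)=\int_0^x \frac{e^{it\lambda}}{\cos t}\,dt$ satisfies \[ \mathrm{Eci}(x,\lambda)=e^{ix\lambda}\,\mathrm{L}\left(x-\frac{\pi}{2},\lambda\right)+i\,\mathrm{S}_{\pi/2}(\lambda), \] and admits the Laplace transform representation \[ \mathrm{Eci}(y,\lambda)=i\int_0^\infty e^{-\lambda u}\left(\frac{1}{\cosh u}-\frac{e^{i\lambda y}}{\cosh(u-iy)}\right)du. \]
   Context: Here $0<x,y<\pi/2$ and $\lambda$ is a real parameter (with $\lambda>-1$ for the Laplace integrals). $L(x,\mu)=\sum_{k=1}^\infty \frac{e^{ikx}}{k+\mu}$ and $\mathrm{L}(x,\lambda)=e^{-ix}L\left(2x,\frac{\lambda-1}{2}\right)=2\sum_{k=1}^\infty\frac{e^{(2k-1)ix}}{2k-1+\lambda}$, which has the representation $\mathrm{L}(x,\lambda)=\int_0^\infty\frac{e^{-\lambda u}du}{\sinh(u-ix)}$. The special value $\mathrm{S}_{\pi/2}(\lambda)=2\sum_{k=1}^\infty \frac{(-1)^{k-1}}{2k-1+\lambda}=\int_0^\infty\frac{e^{-\lambda u}}{\cosh u}du$. *)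

theory Defs
  imports "HOL-Analysis.Analysis"
begin

definition Eci :: "real \<Rightarrow> real \<Rightarrow> complex" where
  "Eci x lam = integral {0..x} (\<lambda>t. exp (\<i> * complex_of_real (t * lam)) / complex_of_real (cos t))"

text \<open>L(x,lambda) = 2 sum_{k>=1} e^{(2k-1) i x} / (2k-1+lambda), index shifted to k>=0\<close>
definition Lser :: "real \<Rightarrow> real \<Rightarrow> complex" where
  "Lser x lam = 2 * (\<Sum>k. exp (\<i> * complex_of_real ((2 * real k + 1) * x)) / complex_of_real (2 * real k + 1 + lam))"

text \<open>S_{pi/2}(lambda) = 2 sum_{k>=1} (-1)^{k-1} / (2k-1+lambda), index shifted to k>=0\<close>
definition Spi2 :: "real \<Rightarrow> complex" where
  "Spi2 lam = complex_of_real (2 * (\<Sum>k. (-1) ^ k / (2 * real k + 1 + lam)))"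

end

theory Submission imports Defs "HOL-Real_Asymp.Real_Asymp" "HOL-Complex_Analysis.Complex_Analysis" begin

definition gE :: "real \<Rightarrow> complex \<Rightarrow> complex" where
  "gE lam w = exp (\<i> * of_real lam * w) / cos w"
definition qE :: "complex \<Rightarrow> complex" where "qE w = - exp (2 * \<i> * w)"
definition PE :: "real \<Rightarrow> nat \<Rightarrow> complex \<Rightarrow> complex" where
  "PE lam N w = 2 * (\<Sum>k<N. exp (\<i> * (of_real lam * w + of_real (2 * real k + 1) * (w - of_real pi / 2))) / of_real (2 * real k + 1 + lam))"

lemma exp_mhalfpi: "exp (- (\<i> * of_real pi / 2)) = - \<i>"
proof -
  have "exp (- (\<i> * of_real pi / 2)) = cis (- (pi/2))"
    by (simp add: cis_conv_exp)
  also have "\<dots> = - \<i>" by (simp add: complex_eq_iff)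
  finally show ?thesis .
qed

lemma exp_term: "exp (\<i> * (of_real (2 * real k + 1) * (w - of_real pi / 2))) = - \<i> * exp (\<i> * w) * qE w ^ k"
proof -
  have "\<i> * (of_real (2 * real k + 1) * (w - of_real pi / 2)) =
        \<i> * w + (- (\<i> * of_real pi / 2)) + of_nat k * (2 * \<i> * w - \<i> * of_real pi)"
    by (simp add: algebra_simps)
  hence "exp (\<i> * (of_real (2 * real k + 1) * (w - of_real pi / 2))) =
     exp (\<i> * w) * exp (- (\<i> * of_real pi / 2)) * exp (2 * \<i> * w - \<i> * of_real pi) ^ k"
    by (simp only: exp_add exp_of_nat_mult)
  also have "exp (2 * \<i> * w - \<i> * of_real pi) = qE w"
    by (simp add: exp_diff qE_def)
  finally show ?thesis by (simp add: exp_mhalfpi)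
qed

lemma alg_aux:
  fixes c e q qN S E :: complex
  assumes "c \<noteq> 0" "2 * e * c = 1 - q" "1 - qN = (1 - q) * S"
  shows "2 * E * e * S = E / c * (1 - qN)"
proof -
  have "E / c * (1 - qN) = E / c * (2 * e * c * S)" using assms(2,3) by simp
  also have "\<dots> = 2 * E * e * S" using assms(1) by (simp add: field_simps)
  finally show ?thesis by simp
qed

lemma PE_deriv:
  assumes "cos w \<noteq> 0" and d: "\<And>k. k < N \<Longrightarrow> 2 * real k + 1 + lam \<noteq> 0"
  shows "(PE lam N has_field_derivative gE lam w * (1 - qE w ^ N)) (at w)"
proof -
  have t: "((\<lambda>w. exp (\<i> * (of_real lam * w + of_real (2 * real k + 1) * (w - of_real pi / 2))) / of_real (2 * real k + 1 + lam))
     has_field_derivative \<i> * exp (\<i> * (of_real lam * w + of_real (2 * real k + 1) * (w - of_real pi / 2)))) (at w)"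
    if "k < N" for k
  proof -
    have dk: "(of_real lam + of_real (2 * real k + 1) :: complex) \<noteq> 0" using d[OF that]
      by (metis of_real_add of_real_eq_0_iff add.commute)
    have e: "(of_real (2 * real k + 1 + lam) :: complex) = of_real lam + of_real (2 * real k + 1)" by simp
    show ?thesis unfolding e
      apply (rule DERIV_cdivide[THEN DERIV_cong])
       apply (rule derivative_eq_intros refl)+
      using dk by (simp add: field_simps)
  qed
  have "(PE lam N has_field_derivative 2 * (\<Sum>k<N. \<i> * exp (\<i> * (of_real lam * w + of_real (2 * real k + 1) * (w - of_real pi / 2))))) (at w)"
    unfolding PE_def[abs_def]
    by (rule DERIV_cmult DERIV_sum t)+ simp
  moreover have "2 * (\<Sum>k<N. \<i> * exp (\<i> * (of_real lam * w + of_real (2 * real k + 1) * (w - of_real pi / 2))))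
     = gE lam w * (1 - qE w ^ N)"
  proof -
    have "2 * (\<Sum>k<N. \<i> * exp (\<i> * (of_real lam * w + of_real (2 * real k + 1) * (w - of_real pi / 2))))
       = 2 * exp (\<i> * of_real lam * w) * exp (\<i> * w) * (\<Sum>k<N. qE w ^ k)"
    proof -
      have r: "exp (\<i> * (of_real lam * w + of_real (2 * real k + 1) * (w - of_real pi / 2)))
         = exp (\<i> * (of_real lam * w)) * (- \<i> * exp (\<i> * w) * qE w ^ k)" for k
        by (simp only: distrib_left exp_add exp_term)
      show ?thesis unfolding r by (simp add: sum_distrib_left sum_distrib_right mult_ac)
    qed
    moreover have "2 * exp (\<i> * w) * cos w = 1 - qE w"
      by (simp add: cos_exp_eq qE_def field_simps exp_minus flip: exp_add)
    moreover have "1 - qE w ^ N = (1 - qE w) * (\<Sum>k<N. qE w ^ k)" by (rule one_diff_power_eq)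
    ultimately show ?thesis using assms(1) unfolding gE_def by (metis alg_aux)
  qed
  ultimately show ?thesis by simp
qed

definition gdE :: "real \<Rightarrow> complex \<Rightarrow> complex" where
  "gdE lam w = exp (\<i> * of_real lam * w) * (\<i> * of_real lam * cos w + sin w) / (cos w)^2"

lemma gE_deriv: "cos w \<noteq> 0 \<Longrightarrow> (gE lam has_field_derivative gdE lam w) (at w)"
  unfolding gE_def[abs_def] gdE_def
  apply (rule derivative_eq_intros refl)+
  apply (auto simp: field_simps power2_eq_square)
  done

lemma qE_pow_deriv: "((\<lambda>w. qE w ^ N) has_field_derivative (2 * \<i> * of_nat N) * qE w ^ N) (at w)"
proof -
  have "((\<lambda>w. qE w ^ N) has_field_derivative of_nat N * qE w ^ (N - 1) * (2 * \<i> * qE w)) (at w)"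
    unfolding qE_def[abs_def]
    by (rule derivative_eq_intros refl)+ (simp add: qE_def)
  moreover have "of_nat N * qE w ^ (N - 1) * (2 * \<i> * qE w) = (2 * \<i> * of_nat N) * qE w ^ N"
    by (cases N) (auto simp: mult_ac)
  ultimately show ?thesis by metis
qed

lemma norm_qE_real [simp]: "norm (qE (of_real t)) = 1"
  by (simp add: qE_def norm_minus_commute)

lemma qE_0 [simp]: "qE 0 = -1" by (simp add: qE_def)

lemma cos_real_ne0: "0 \<le> t \<Longrightarrow> t < pi/2 \<Longrightarrow> cos (complex_of_real t) \<noteq> 0"
  using cos_gt_zero_pi[of t] by (simp add: cos_of_real)

lemma RL:
  assumes x: "0 < x" "x < pi/2"
  shows "(\<lambda>N. integral {0..x} (\<lambda>t. gE lam (of_real t) * qE (of_real t) ^ N)) \<longlonglongrightarrow> 0"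
proof -
  have cne: "cos (complex_of_real t) \<noteq> 0" if "t \<in> {0..x}" for t
    using that x cos_real_ne0 by auto
  have contgd: "continuous_on {0..x} (\<lambda>t. gdE lam (of_real t))"
    unfolding gdE_def using cne by (auto intro!: continuous_intros)
  obtain M where M: "M \<ge> 0" "\<And>t. t \<in> {0..x} \<Longrightarrow> norm (gdE lam (of_real t)) \<le> M"
    using continuous_on_compact_bound[OF compact_Icc contgd] by blast
  define C where "C = (norm (gE lam (of_real x)) + norm (gE lam 0) + M * x) / 2"
  have bound: "norm (integral {0..x} (\<lambda>t. gE lam (of_real t) * qE (of_real t) ^ N)) \<le> C / real N"
    if N: "N \<ge> 1" for N
  proof -
    define G where "G = (\<lambda>w. gE lam w * qE w ^ N / (2 * \<i> * of_nat N))"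
    have Nne: "(2 * \<i> * of_nat N :: complex) \<noteq> 0" using N by simp
    have Gd: "(G has_field_derivative gdE lam w * qE w ^ N / (2 * \<i> * of_nat N) + gE lam w * qE w ^ N) (at w)"
      if "cos w \<noteq> 0" for w
      unfolding G_def
      apply (rule DERIV_cdivide[THEN DERIV_cong])
       apply (rule DERIV_mult gE_deriv qE_pow_deriv that)+
      using Nne by (simp add: field_simps)
    have ftc: "((\<lambda>t. gdE lam (of_real t) * qE (of_real t) ^ N / (2 * \<i> * of_nat N) + gE lam (of_real t) * qE (of_real t) ^ N)
        has_integral (G (of_real x) - G (of_real 0))) {0..x}"
      by (rule fundamental_theorem_of_calculus) (use x cne Gd in \<open>auto intro!: has_vector_derivative_real_field\<close>)
    have cont1: "continuous_on {0..x} (\<lambda>t. gdE lam (of_real t) * qE (of_real t) ^ N / (2 * \<i> * of_nat N))"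
      unfolding qE_def using contgd Nne by (auto intro!: continuous_intros)
    define J where "J = integral {0..x} (\<lambda>t. gdE lam (of_real t) * qE (of_real t) ^ N / (2 * \<i> * of_nat N))"
    have hJ: "((\<lambda>t. gdE lam (of_real t) * qE (of_real t) ^ N / (2 * \<i> * of_nat N)) has_integral J) {0..x}"
      unfolding J_def using integrable_continuous_interval[OF cont1] by (rule integrable_integral)
    have "((\<lambda>t. gE lam (of_real t) * qE (of_real t) ^ N) has_integral (G (of_real x) - G (of_real 0) - J)) {0..x}"
      using has_integral_diff[OF ftc hJ] by simp
    hence eqI: "integral {0..x} (\<lambda>t. gE lam (of_real t) * qE (of_real t) ^ N) = G (of_real x) - G 0 - J"
      by (simp add: integral_unique)
    have nJ: "norm J \<le> M / (2 * real N) * x"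
    proof -
      have "norm J \<le> M / (2 * real N) * Henstock_Kurzweil_Integration.content (cbox 0 x)"
        apply (rule has_integral_bound[of _ "\<lambda>t. gdE lam (of_real t) * qE (of_real t) ^ N / (2 * \<i> * of_nat N)"])
        using M hJ N apply (auto simp: norm_mult norm_divide norm_power divide_right_mono)
        done
      thus ?thesis using x by simp
    qed
    have nG: "norm (G w) = norm (gE lam w) / (2 * real N)" if "w = of_real x \<or> w = 0" for w
      using that unfolding G_def by (auto simp: norm_mult norm_divide norm_power)
    have "norm (G (of_real x) - G 0 - J) \<le> norm (G (of_real x) - G 0) + norm J" by (rule norm_triangle_ineq4)
    moreover have "norm (G (of_real x) - G 0) \<le> norm (G (of_real x)) + norm (G 0)" by (rule norm_triangle_ineq4)
    ultimately have "norm (G (of_real x) - G 0 - J) \<le> norm (G (of_real x)) + norm (G 0) + norm J" by linarith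
    also have "\<dots> \<le> norm (gE lam (of_real x)) / (2 * real N) + norm (gE lam 0) / (2 * real N) + M / (2 * real N) * x"
      using nG nJ by simp
    also have "\<dots> = C / real N" unfolding C_def by (simp add: add_divide_distrib ac_simps)
    finally show ?thesis using eqI by simp
  qed
  show ?thesis
  proof (rule Lim_null_comparison)
    show "\<forall>\<^sub>F N in sequentially. norm (integral {0..x} (\<lambda>t. gE lam (of_real t) * qE (of_real t) ^ N)) \<le> C / real N"
      using eventually_ge_at_top[of "1::nat"] by (rule eventually_mono) (rule bound)
    show "(\<lambda>N. C / real N) \<longlonglongrightarrow> 0" by real_asymp
  qed
qed

lemma Eci_gE: "Eci x lam = integral {0..x} (\<lambda>t. gE lam (of_real t))"
  unfolding Eci_def gE_def by (simp add: cos_of_real mult_ac)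

lemma alt_summable:
  assumes d: "\<forall>k. 2 * real k + 1 + lam \<noteq> 0"
  shows "summable (\<lambda>k. (-1)^k / (2 * real k + 1 + lam))"
proof -
  define m where "m = nat \<lceil>\<bar>lam\<bar>\<rceil>"
  have mge: "real m \<ge> \<bar>lam\<bar>" unfolding m_def by linarith
  define b where "b k = 1 / (2 * real (k + m) + 1 + lam)" for k
  have pos: "2 * real (k + m) + 1 + lam \<ge> 1" for k using mge by auto
  have "summable (\<lambda>k. (-1)^k * b k)"
  proof (rule summable_Leibniz'(1))
    show "b \<longlonglongrightarrow> 0" unfolding b_def by real_asymp
    show "0 \<le> b k" for k using pos[of k] unfolding b_def by simp
    show "b (Suc k) \<le> b k" for k using pos[of k] pos[of "Suc k"] unfolding b_def
      by (intro divide_left_mono) auto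
  qed
  hence "summable (\<lambda>k. (-1)^m * ((-1)^k * b k))" by (rule summable_mult)
  hence "summable (\<lambda>k. (-1)^(k+m) / (2 * real (k+m) + 1 + lam))"
    by (simp add: b_def power_add mult_ac)
  thus ?thesis using summable_iff_shift[of "\<lambda>k. (-1)^k / (2 * real k + 1 + lam)" m] by simp
qed

lemma part1:
  assumes x: "0 < x" "x < pi/2" and d: "\<forall>k. 2 * real k + 1 + lam \<noteq> 0"
  shows "Eci x lam = exp (\<i> * complex_of_real (x * lam)) * Lser (x - pi / 2) lam + \<i> * Spi2 lam"
proof -
  define E where "E = Eci x lam"
  define a where "a k = (-1)^k / (2 * real k + 1 + lam)" for k
  define u where "u k = exp (\<i> * complex_of_real ((2 * real k + 1) * (x - pi/2))) / complex_of_real (2 * real k + 1 + lam)" for k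
  define I where "I N = integral {0..x} (\<lambda>t. gE lam (of_real t) * qE (of_real t) ^ N)" for N
  define X where "X = exp (\<i> * complex_of_real (x * lam))"
  have Xne: "X \<noteq> 0" unfolding X_def by simp
  have cne: "cos (complex_of_real t) \<noteq> 0" if "t \<in> {0..x}" for t
    using that x cos_real_ne0 by auto
  have contg: "continuous_on {0..x} (\<lambda>t. gE lam (of_real t))"
    unfolding gE_def using cne by (auto intro!: continuous_intros)
  have hg: "((\<lambda>t. gE lam (of_real t)) has_integral E) {0..x}"
    unfolding E_def Eci_gE using integrable_continuous_interval[OF contg] by (rule integrable_integral)
  have P: "PE lam N (of_real x) = E + PE lam N 0 - I N" for N
  proof -
    have "((\<lambda>t. gE lam (of_real t) * (1 - qE (of_real t) ^ N)) has_integral (PE lam N (of_real x) - PE lam N (of_real 0))) {0..x}"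
      by (rule fundamental_theorem_of_calculus) (use x cne d in \<open>auto intro!: has_vector_derivative_real_field PE_deriv\<close>)
    from has_integral_diff[OF hg this]
    have "((\<lambda>t. gE lam (of_real t) * qE (of_real t) ^ N) has_integral (E - (PE lam N (of_real x) - PE lam N 0))) {0..x}"
      by (simp add: algebra_simps)
    hence "I N = E - (PE lam N (of_real x) - PE lam N 0)" unfolding I_def by (rule integral_unique)
    thus ?thesis by simp
  qed
  have P0: "PE lam N 0 = - \<i> * of_real (2 * (\<Sum>k<N. a k))" for N
  proof -
    have t: "exp (\<i> * (of_real lam * 0 + of_real (2 * real k + 1) * (0 - of_real pi / 2))) = - \<i> * (-1)^k" for k
      using exp_term[of k 0] by simp
    show ?thesis unfolding PE_def t a_def by (simp add: sum_distrib_left mult_ac)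
  qed
  have Px: "PE lam N (of_real x) = X * 2 * (\<Sum>k<N. u k)" for N
  proof -
    have t: "exp (\<i> * (of_real lam * of_real x + of_real (2 * real k + 1) * (of_real x - of_real pi / 2))) / of_real (2 * real k + 1 + lam)
       = X * u k" for k
    proof -
      have e1: "exp (\<i> * (of_real lam * of_real x + of_real (2 * real k + 1) * (of_real x - of_real pi / 2)))
          = exp (\<i> * (of_real lam * of_real x)) * exp (\<i> * (of_real (2 * real k + 1) * (of_real x - of_real pi / 2)))"
        by (simp only: distrib_left exp_add)
      have e2: "exp (\<i> * (of_real lam * of_real x)) = X" unfolding X_def by (simp add: mult_ac)
      have e3: "exp (\<i> * (of_real (2 * real k + 1) * (of_real x - of_real pi / 2)))
          = exp (\<i> * complex_of_real ((2 * real k + 1) * (x - pi/2)))" by simp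
      show ?thesis unfolding e1 e2 e3 u_def by simp
    qed
    show ?thesis unfolding PE_def t by (simp add: sum_distrib_left mult_ac)
  qed
  have sa: "summable a" unfolding a_def using alt_summable[OF d] .
  have lim0: "(\<lambda>N. PE lam N 0) \<longlonglongrightarrow> - \<i> * Spi2 lam"
    unfolding P0 Spi2_def a_def[symmetric]
    by (intro tendsto_intros summable_LIMSEQ sa)
  have limI: "I \<longlonglongrightarrow> 0" unfolding I_def[abs_def] by (rule RL[OF x])
  have "(\<lambda>N. (E + PE lam N 0 - I N) / (2 * X)) \<longlonglongrightarrow> (E + (- \<i> * Spi2 lam) - 0) / (2 * X)"
    by (intro tendsto_intros lim0 limI) (use Xne in simp)
  moreover have "(E + PE lam N 0 - I N) / (2 * X) = (\<Sum>k<N. u k)" for N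
    using P[of N] Px[of N] Xne by (simp add: field_simps)
  ultimately have "u sums ((E - \<i> * Spi2 lam) / (2 * X))" unfolding sums_def by simp
  hence "Lser (x - pi / 2) lam = 2 * ((E - \<i> * Spi2 lam) / (2 * X))"
    unfolding Lser_def u_def[symmetric] by (simp add: sums_unique[symmetric])
  hence "X * Lser (x - pi / 2) lam = E - \<i> * Spi2 lam" using Xne by simp
  hence "E = X * Lser (x - pi / 2) lam + \<i> * Spi2 lam" by (metis diff_add_cancel)
  thus ?thesis unfolding E_def X_def .
qed

definition hE :: "real \<Rightarrow> complex \<Rightarrow> complex" where
  "hE lam w = exp (- of_real lam * w) / cosh w"

lemma norm_cosh_sq: "norm (cosh w) ^ 2 = cos (Im w) ^ 2 + (exp (Re w) - inverse (exp (Re w))) ^ 2 / 4"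
  unfolding cosh_conv_cos norm_cos_squared by simp

lemma cosh_lower:
  shows "norm (cosh w) \<ge> cos (Im w) * exp (Re w) / 2"
proof -
  define c where "c = cos (Im w)"
  define e where "e = exp (Re w)"
  define X where "X = (e - inverse e) ^ 2"
  have e0: "e > 0" unfolding e_def by simp
  have c1: "c ^ 2 \<le> 1" unfolding c_def by (simp add: abs_square_le_1 abs_cos_le_one)
  have X0: "X \<ge> 0" unfolding X_def by simp
  have "X = e^2 - 2 + (inverse e)^2" unfolding X_def using e0
    by (simp add: power2_eq_square algebra_simps)
  hence eX: "e^2 \<le> X + 4" by (simp add: add_increasing)
  have "(c * e / 2)^2 = c^2 * e^2 / 4" by (simp add: power_mult_distrib power_divide)
  also have "\<dots> \<le> c^2 * (X + 4) / 4" using eX by (intro divide_right_mono mult_left_mono) auto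
  also have "\<dots> = c^2 * X / 4 + c^2" by (simp add: field_simps)
  also have "\<dots> \<le> X / 4 + c^2" using c1 X0 by (intro add_right_mono divide_right_mono mult_left_le_one_le) auto
  also have "\<dots> = norm (cosh w) ^ 2" unfolding norm_cosh_sq X_def c_def e_def by simp
  finally have "(c * e / 2)^2 \<le> norm (cosh w) ^ 2" .
  hence "c * e / 2 \<le> norm (cosh w)" by (rule power2_le_imp_le) simp
  thus ?thesis unfolding c_def e_def .
qed

lemma hE_bound:
  assumes "cos (Im w) > 0"
  shows "norm (hE lam w) \<le> 2 * exp (- (lam + 1) * Re w) / cos (Im w)"
proof -
  have pos: "cos (Im w) * exp (Re w) / 2 > 0" using assms by simp
  have "norm (hE lam w) = exp (- lam * Re w) / norm (cosh w)"
    unfolding hE_def by (simp add: norm_divide)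
  also have "\<dots> \<le> exp (- lam * Re w) / (cos (Im w) * exp (Re w) / 2)"
  proof -
    have npos: "norm (cosh w) > 0" using cosh_lower[of w] pos by linarith
    show ?thesis using cosh_lower[of w] pos npos by (intro divide_left_mono) (auto intro: mult_pos_pos)
  qed
  also have "\<dots> = 2 * exp (- (lam + 1) * Re w) / cos (Im w)"
  proof -
    have "exp (- (lam + 1) * Re w) = exp (- lam * Re w) / exp (Re w)"
      by (simp add: exp_diff[symmetric] algebra_simps)
    thus ?thesis by (simp add: mult_ac)
  qed
  finally show ?thesis .
qed

lemma cosh_of_real_c: "cosh (complex_of_real u) = complex_of_real (cosh u)"
  by (simp add: cosh_field_def exp_of_real flip: of_real_minus)

lemma part2:
  assumes y: "0 < y" "y < pi/2" and lam: "lam > -1"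
  shows "Eci y lam = \<i> * integral {0..} (\<lambda>u. complex_of_real (exp (- lam * u)) *
              (1 / complex_of_real (cosh u)
               - exp (\<i> * complex_of_real (lam * y)) / cosh (complex_of_real u - \<i> * complex_of_real y)))"
proof -
  define S where "S = {w. Im w < pi/2} \<inter> {w. Im w > -(pi/2)}"
  have convS: "convex S" unfolding S_def by (intro convex_Int convex_halfspace_Im_lt convex_halfspace_Im_gt)
  have openS: "open S" unfolding S_def by (intro open_Int open_halfspace_Im_lt open_halfspace_Im_gt)
  have inS: "w \<in> S \<longleftrightarrow> \<bar>Im w\<bar> < pi/2" for w unfolding S_def by auto
  have cosS: "cos (Im w) > 0" if "w \<in> S" for w using that cos_gt_zero_pi unfolding S_def by auto
  have coshne: "cosh w \<noteq> 0" if "w \<in> S" for w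
  proof -
    have "0 < cos (Im w) * exp (Re w) / 2" using cosS[OF that] by simp
    with cosh_lower[of w] show ?thesis by auto
  qed
  have holo: "hE lam holomorphic_on S"
    unfolding holomorphic_on_open[OF openS]
  proof
    fix w assume w: "w \<in> S"
    show "\<exists>f'. (hE lam has_field_derivative f') (at w)"
      unfolding hE_def[abs_def]
      apply (rule exI)
      apply (rule derivative_intros)+
      using coshne[OF w] by simp
  qed
  obtain H where Hd0: "\<And>w. w \<in> S \<Longrightarrow> (H has_field_derivative hE lam w) (at w within S)"
    using holomorphic_convex_primitive'[OF convS openS holo] by blast
  have Hd: "(H has_field_derivative hE lam w) (at w)" if "w \<in> S" for w
    using Hd0[OF that] at_within_open[OF that openS] by simp
  have horiz: "((\<lambda>u. hE lam (of_real u - \<i> * of_real c)) has_integral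
       (H (of_real R - \<i> * of_real c) - H (of_real 0 - \<i> * of_real c))) {0..R}"
    if c: "\<bar>c\<bar> < pi/2" and R: "0 \<le> R" for c R
  proof (rule fundamental_theorem_of_calculus[OF R])
    fix u assume "u \<in> {0..R}"
    have "((\<lambda>z. H (z - \<i> * of_real c)) has_field_derivative hE lam (of_real u - \<i> * of_real c) * (1 - 0)) (at (of_real u))"
      by (rule DERIV_chain2[OF Hd DERIV_diff[OF DERIV_ident DERIV_const]]) (use c in \<open>simp add: inS\<close>)
    thus "((\<lambda>u. H (of_real u - \<i> * of_real c)) has_vector_derivative hE lam (of_real u - \<i> * of_real c)) (at u within {0..R})"
      using has_vector_derivative_real_field by fastforce
  qed
  have vert0: "((\<lambda>t. hE lam (- (\<i> * of_real t))) has_integral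
       (\<i> * H (- (\<i> * of_real y)) - \<i> * H (- (\<i> * of_real 0)))) {0..y}"
  proof (rule fundamental_theorem_of_calculus)
    show "0 \<le> y" using y by simp
    fix t assume t: "t \<in> {0..y}"
    have "((\<lambda>z. H (- (\<i> * z))) has_field_derivative hE lam (- (\<i> * of_real t)) * (- (\<i> * 1))) (at (of_real t))"
      by (rule DERIV_chain2[OF Hd DERIV_minus[OF DERIV_cmult[OF DERIV_ident]]]) (use t y in \<open>simp add: inS\<close>)
    hence "((\<lambda>z. \<i> * H (- (\<i> * z))) has_field_derivative \<i> * (hE lam (- (\<i> * of_real t)) * (- (\<i> * 1)))) (at (of_real t))"
      by (rule DERIV_cmult)
    hence "((\<lambda>z. \<i> * H (- (\<i> * z))) has_field_derivative hE lam (- (\<i> * of_real t))) (at (of_real t))"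
      by (simp add: algebra_simps)
    thus "((\<lambda>t. \<i> * H (- (\<i> * of_real t))) has_vector_derivative hE lam (- (\<i> * of_real t))) (at t within {0..y})"
      using has_vector_derivative_real_field by fastforce
  qed
  have vertR: "((\<lambda>t. - \<i> * hE lam (of_real R - \<i> * of_real t)) has_integral
       (H (of_real R - \<i> * of_real y) - H (of_real R - \<i> * of_real 0))) {0..y}" for R
  proof (rule fundamental_theorem_of_calculus)
    show "0 \<le> y" using y by simp
    fix t assume t: "t \<in> {0..y}"
    have "((\<lambda>z. H (of_real R - \<i> * z)) has_field_derivative hE lam (of_real R - \<i> * of_real t) * (0 - \<i> * 1)) (at (of_real t))"
      by (rule DERIV_chain2[OF Hd DERIV_diff[OF DERIV_const DERIV_cmult[OF DERIV_ident]]]) (use t y in \<open>simp add: inS\<close>)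
    hence "((\<lambda>z. H (of_real R - \<i> * z)) has_field_derivative - \<i> * hE lam (of_real R - \<i> * of_real t)) (at (of_real t))"
      by (simp add: algebra_simps)
    thus "((\<lambda>t. H (of_real R - \<i> * of_real t)) has_vector_derivative - \<i> * hE lam (of_real R - \<i> * of_real t)) (at t within {0..y})"
      using has_vector_derivative_real_field by fastforce
  qed
  have Eci_H: "Eci y lam = \<i> * H (- (\<i> * of_real y)) - \<i> * H 0"
  proof -
    have eq: "exp (\<i> * complex_of_real (t * lam)) / complex_of_real (cos t) = hE lam (- (\<i> * of_real t))" for t
    proof -
      have "cosh (- (\<i> * complex_of_real t)) = complex_of_real (cos t)"
        by (simp add: cosh_conv_cos cos_of_real)
      moreover have "exp (- complex_of_real lam * - (\<i> * complex_of_real t)) = exp (\<i> * complex_of_real (t * lam))"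
        by (simp add: algebra_simps)
      ultimately show ?thesis unfolding hE_def by simp
    qed
    show ?thesis unfolding Eci_def eq using integral_unique[OF vert0] by simp
  qed
  define F where "F u = hE lam (of_real u) - hE lam (of_real u - \<i> * of_real y)" for u
  have Feq: "(\<lambda>u. complex_of_real (exp (- lam * u)) *
              (1 / complex_of_real (cosh u)
               - exp (\<i> * complex_of_real (lam * y)) / cosh (complex_of_real u - \<i> * complex_of_real y))) = F"
  proof
    fix u
    have e1: "hE lam (of_real u) = complex_of_real (exp (- lam * u)) * (1 / complex_of_real (cosh u))"
      unfolding hE_def cosh_of_real_c by (simp add: exp_of_real[symmetric])
    have "- complex_of_real lam * (complex_of_real u - \<i> * complex_of_real y) = complex_of_real (- lam * u) + \<i> * complex_of_real (lam * y)"
      by (simp add: algebra_simps)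
    hence "exp (- complex_of_real lam * (complex_of_real u - \<i> * complex_of_real y)) = complex_of_real (exp (- lam * u)) * exp (\<i> * complex_of_real (lam * y))"
      by (simp only: exp_add exp_of_real)
    hence e2: "hE lam (of_real u - \<i> * of_real y) = complex_of_real (exp (- lam * u)) * (exp (\<i> * complex_of_real (lam * y)) / cosh (complex_of_real u - \<i> * complex_of_real y))"
      unfolding hE_def by simp
    show "complex_of_real (exp (- lam * u)) *
              (1 / complex_of_real (cosh u)
               - exp (\<i> * complex_of_real (lam * y)) / cosh (complex_of_real u - \<i> * complex_of_real y)) = F u"
      unfolding F_def e1 e2 by (simp add: algebra_simps)
  qed
  define D where "D R = H (of_real R) - H (of_real R - \<i> * of_real y)" for R
  have intF: "(F has_integral (- \<i> * Eci y lam + D R)) {0..R}" if R: "0 \<le> R" for R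
  proof -
    have h0: "((\<lambda>u. hE lam (of_real u - \<i> * of_real 0)) has_integral
       (H (of_real R - \<i> * of_real 0) - H (of_real 0 - \<i> * of_real 0))) {0..R}"
      by (rule horiz) (use R in auto)
    have hy: "((\<lambda>u. hE lam (of_real u - \<i> * of_real y)) has_integral
       (H (of_real R - \<i> * of_real y) - H (of_real 0 - \<i> * of_real y))) {0..R}"
      by (rule horiz) (use R y in auto)
    from has_integral_diff[OF h0 hy]
    have "(F has_integral ((H (of_real R) - H 0) - (H (of_real R - \<i> * of_real y) - H (- (\<i> * of_real y))))) {0..R}"
      unfolding F_def by simp
    moreover have "(H (of_real R) - H 0) - (H (of_real R - \<i> * of_real y) - H (- (\<i> * of_real y))) = - \<i> * Eci y lam + D R"
      unfolding Eci_H D_def by (simp add: algebra_simps)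
    ultimately show ?thesis by simp
  qed
  have Dbound: "norm (D R) \<le> 2 * exp (- (lam + 1) * R) / cos y * y" if R: "0 \<le> R" for R
  proof -
    have "norm (H (of_real R - \<i> * of_real y) - H (of_real R - \<i> * of_real 0)) \<le> 2 * exp (- (lam + 1) * R) / cos y * Henstock_Kurzweil_Integration.content (cbox 0 y)"
    proof (rule has_integral_bound[of _ "\<lambda>t. - \<i> * hE lam (of_real R - \<i> * of_real t)"])
      show "0 \<le> 2 * exp (- (lam + 1) * R) / cos y" using cos_gt_zero_pi[of y] y by simp
      show "((\<lambda>t. - \<i> * hE lam (of_real R - \<i> * of_real t)) has_integral (H (of_real R - \<i> * of_real y) - H (of_real R - \<i> * of_real 0))) (cbox 0 y)"
        using vertR by simp
      fix t assume t: "t \<in> cbox 0 y"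
      have ct: "cos y \<le> cos t" using t y by (intro cos_monotone_0_pi_le) auto
      have cy: "cos y > 0" using cos_gt_zero_pi[of y] y by simp
      have "norm (- \<i> * hE lam (of_real R - \<i> * of_real t)) = norm (hE lam (of_real R - \<i> * of_real t))"
        by (simp add: norm_mult)
      also have "\<dots> \<le> 2 * exp (- (lam + 1) * R) / cos t"
        using hE_bound[of "of_real R - \<i> * of_real t" lam] ct cy by simp
      also have "\<dots> \<le> 2 * exp (- (lam + 1) * R) / cos y"
        using ct cy by (intro divide_left_mono) auto
      finally show "norm (- \<i> * hE lam (of_real R - \<i> * of_real t)) \<le> 2 * exp (- (lam + 1) * R) / cos y" .
    qed
    thus ?thesis using y unfolding D_def by (simp add: norm_minus_commute)
  qed
  have cy: "cos y > 0" using cos_gt_zero_pi[of y] y by simp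
  have cy1: "cos y \<le> 1" by simp
  define f where "f N u = (if u \<in> {..real N} then F u else 0)" for N u
  define g where "g u = 4 / cos y * exp (- (lam + 1) * u)" for u
  have hf: "(f N has_integral (- \<i> * Eci y lam + D (real N))) {0..}" for N
  proof -
    have "{..real N} \<inter> {0..} = {0..real N}" by auto
    thus ?thesis unfolding f_def has_integral_restrict_Int using intF[of "real N"] by simp
  qed
  have gint: "g integrable_on {0..}"
    using integrable_on_cmult_left[OF integrable_on_exp_minus_to_infinity[of "lam+1" 0], of "4 / cos y"] lam
    unfolding g_def by simp
  have Fb: "norm (F u) \<le> g u" if u: "u \<in> {0..}" for u
  proof -
    have "norm (F u) \<le> norm (hE lam (of_real u)) + norm (hE lam (of_real u - \<i> * of_real y))"
      unfolding F_def by (rule norm_triangle_ineq4)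
    also have "\<dots> \<le> 2 * exp (- (lam + 1) * u) / cos 0 + 2 * exp (- (lam + 1) * u) / cos y"
      using hE_bound[of "of_real u" lam] hE_bound[of "of_real u - \<i> * of_real y" lam] cy
      by (intro add_mono) auto
    also have "\<dots> \<le> 2 * exp (- (lam + 1) * u) / cos y + 2 * exp (- (lam + 1) * u) / cos y"
    proof -
      have "2 * exp (- (lam + 1) * u) * cos y \<le> 2 * exp (- (lam + 1) * u)"
        using cy1 by (intro mult_left_le) auto
      hence "2 * exp (- (lam + 1) * u) \<le> 2 * exp (- (lam + 1) * u) / cos y"
        using cy by (simp add: le_divide_eq)
      thus ?thesis by simp
    qed
    also have "\<dots> = g u" unfolding g_def by simp
    finally show ?thesis .
  qed
  have fb: "\<forall>u\<in>{0..}. norm (f N u) \<le> g u" for N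
  proof
    fix u :: real assume u: "u \<in> {0..}"
    have "0 \<le> g u" unfolding g_def using cy by simp
    thus "norm (f N u) \<le> g u" using Fb[OF u] unfolding f_def by simp
  qed
  have fconv: "\<forall>u\<in>{0..}. (\<lambda>N. f N u) \<longlonglongrightarrow> F u"
  proof
    fix u :: real
    have "eventually (\<lambda>N. f N u = F u) sequentially"
      unfolding eventually_sequentially
    proof (intro exI allI impI)
      fix N assume "nat \<lceil>u\<rceil> \<le> N"
      hence "u \<le> real N" by linarith
      thus "f N u = F u" unfolding f_def by simp
    qed
    thus "(\<lambda>N. f N u) \<longlonglongrightarrow> F u" by (rule tendsto_eventually)
  qed
  define r where "r = exp (- (lam + 1))"
  have r: "0 < r" "r < 1" unfolding r_def using lam by auto
  have rpow: "exp (- (lam + 1) * real N) = r ^ N" for N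
    unfolding r_def by (simp add: exp_of_nat_mult[symmetric] mult_ac)
  have "(\<lambda>N. 2 * r ^ N / cos y * y) \<longlonglongrightarrow> 2 * 0 / cos y * y"
    using r cy by (intro tendsto_intros LIMSEQ_power_zero) auto
  hence Dlim0: "(\<lambda>N. 2 * exp (- (lam + 1) * real N) / cos y * y) \<longlonglongrightarrow> 0"
    unfolding rpow by simp
  have Dlim: "(\<lambda>N. D (real N)) \<longlonglongrightarrow> 0"
    by (rule Lim_null_comparison[OF _ Dlim0]) (rule always_eventually, rule allI, rule Dbound, simp)
  have "(\<lambda>N. - \<i> * Eci y lam + D (real N)) \<longlonglongrightarrow> - \<i> * Eci y lam + 0"
    by (intro tendsto_intros Dlim)
  hence "(F has_integral (- \<i> * Eci y lam)) {0..}"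
    using has_integral_dominated_convergence[OF hf gint fb fconv] by simp
  hence "integral {0..} F = - \<i> * Eci y lam" by (rule integral_unique)
  thus ?thesis unfolding Feq by simp
qed

theorem proposition8:
  fixes x y lam :: real
  assumes "0 < x" "x < pi / 2" "0 < y" "y < pi / 2"
  shows "((\<forall>k::nat. 2 * real k + 1 + lam \<noteq> 0) \<longrightarrow>
           Eci x lam = exp (\<i> * complex_of_real (x * lam)) * Lser (x - pi / 2) lam + \<i> * Spi2 lam) \<and>
         (lam > -1 \<longrightarrow>
           Eci y lam = \<i> * integral {0..} (\<lambda>u. complex_of_real (exp (- lam * u)) *
              (1 / complex_of_real (cosh u)
               - exp (\<i> * complex_of_real (lam * y)) / cosh (complex_of_real u - \<i> * complex_of_real y))))"
  using part1[OF assms(1,2)] part2[OF assms(3,4)] by blast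

end
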